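(* Let $\Gamma$ be a connected finite simple graph on $N\ge3$ vertices with $\varepsilon>\frac12$. Then for every vertex $v$ there exists $w\in\mathcal N(v)$ with $\deg w\le3$.
   Context: For a finite simple graph $\Gamma=(V,E)$ without isolated vertices, $\deg v$ is the number of neighbours of $v$ and $\mathcal N(v)=\{w\in V: w\sim v\}$. The normalized Laplacian acts on functions $f:V\to\mathbb R$ by $\Delta f(v)=f(v)-\frac{1}{\deg v}\sum_{w\sim v}f(w)$; its eigenvalues are $0=\lambda_1\le\lambda_2\le\dots\le\lambda_N$, and $\varepsilon:=\min_i|1-\lambda_i|$. *)

theory Defs
  imports Complex_Main
begin

definition simple_graph :: "'a set \<Rightarrow> ('a \<Rightarrow> 'a \<Rightarrow> bool) \<Rightarrow> bool" where
  "simple_graph V E \<longleftrightarrow> finite V \<and> (\<forall>x y. E x y \<longrightarrow> x \<in> V \<and> y \<in> V)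
     \<and> (\<forall>x y. E x y \<longrightarrow> E y x) \<and> (\<forall>x. \<not> E x x)"

definition connected_graph :: "'a set \<Rightarrow> ('a \<Rightarrow> 'a \<Rightarrow> bool) \<Rightarrow> bool" where
  "connected_graph V E \<longleftrightarrow> (\<forall>x\<in>V. \<forall>y\<in>V. E\<^sup>*\<^sup>* x y)"

definition nbhd :: "'a set \<Rightarrow> ('a \<Rightarrow> 'a \<Rightarrow> bool) \<Rightarrow> 'a \<Rightarrow> 'a set" where
  "nbhd V E v = {w \<in> V. E w v}"

definition deg :: "'a set \<Rightarrow> ('a \<Rightarrow> 'a \<Rightarrow> bool) \<Rightarrow> 'a \<Rightarrow> nat" where
  "deg V E v = card (nbhd V E v)"

definition norm_laplacian :: "'a set \<Rightarrow> ('a \<Rightarrow> 'a \<Rightarrow> bool) \<Rightarrow> ('a \<Rightarrow> real) \<Rightarrow> 'a \<Rightarrow> real" where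
  "norm_laplacian V E f v = f v - (1 / real (deg V E v)) * (\<Sum>w\<in>nbhd V E v. f w)"

definition laplacian_eigenvalue :: "'a set \<Rightarrow> ('a \<Rightarrow> 'a \<Rightarrow> bool) \<Rightarrow> real \<Rightarrow> bool" where
  "laplacian_eigenvalue V E lam \<longleftrightarrow>
     (\<exists>f. (\<exists>v\<in>V. f v \<noteq> 0) \<and> (\<forall>v\<in>V. norm_laplacian V E f v = lam * f v))"

text \<open>\<epsilon> = min over the eigenvalues \<lambda> of |1 - \<lambda>|. The spectrum is finite and nonempty,
  so the infimum is the minimum.\<close>
definition spectral_eps :: "'a set \<Rightarrow> ('a \<Rightarrow> 'a \<Rightarrow> bool) \<Rightarrow> real" where
  "spectral_eps V E = Inf {\<bar>1 - lam\<bar> | lam. laplacian_eigenvalue V E lam}"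

end

theory Submission imports Defs "HOL-Analysis.Analysis" begin

locale G =
  fixes V :: "'a set" and E :: "'a \<Rightarrow> 'a \<Rightarrow> bool"
  assumes sg: "simple_graph V E"
    and dpos: "\<And>u. u \<in> V \<Longrightarrow> deg V E u > 0"
begin

definition dg :: "'a \<Rightarrow> real" where "dg u = real (deg V E u)"
definition Pop :: "('a \<Rightarrow> real) \<Rightarrow> 'a \<Rightarrow> real" where
  "Pop f u = (\<Sum>w\<in>nbhd V E u. f w) / dg u"
definition ip :: "('a \<Rightarrow> real) \<Rightarrow> ('a \<Rightarrow> real) \<Rightarrow> real" where
  "ip f g = (\<Sum>u\<in>V. dg u * f u * g u)"

lemma finV: "finite V" using sg by (simp add: simple_graph_def)
lemma Esym: "E x y \<Longrightarrow> E y x" using sg by (simp add: simple_graph_def)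
lemma EV: "E x y \<Longrightarrow> x \<in> V \<and> y \<in> V" using sg by (simp add: simple_graph_def)
lemma dg_ge1: "u \<in> V \<Longrightarrow> dg u \<ge> 1" using dpos[of u] by (simp add: dg_def)
lemma nb_sub: "nbhd V E u \<subseteq> V" by (auto simp: nbhd_def)
lemma fin_nb: "finite (nbhd V E u)" using finV nb_sub finite_subset by blast

lemma Pop_sum: "Pop f u = (\<Sum>w\<in>V. if E w u then f w else 0) / dg u"
proof -
  have "(\<Sum>w\<in>nbhd V E u. f w) = (\<Sum>w\<in>V. if E w u then f w else 0)"
    unfolding nbhd_def using finV by (simp add: sum.inter_filter)
  then show ?thesis by (simp add: Pop_def)
qed

lemma selfadj_aux: "u \<in> V \<Longrightarrow> dg u * Pop f u * g u = (\<Sum>w\<in>V. if E w u then f w * g u else 0)"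
proof -
  assume u: "u \<in> V"
  then have "dg u \<noteq> 0" using dg_ge1[OF u] by simp
  then have "dg u * Pop f u * g u = (\<Sum>w\<in>V. if E w u then f w else 0) * g u"
    by (simp add: Pop_sum)
  also have "\<dots> = (\<Sum>w\<in>V. if E w u then f w * g u else 0)"
    by (simp add: sum_distrib_right) (intro sum.cong refl, simp)
  finally show ?thesis .
qed

lemma selfadj: "ip (Pop f) g = ip f (Pop g)"
proof -
  have "ip (Pop f) g = (\<Sum>u\<in>V. \<Sum>w\<in>V. if E w u then f w * g u else 0)"
    unfolding ip_def using selfadj_aux by (intro sum.cong refl) auto
  also have "\<dots> = (\<Sum>w\<in>V. \<Sum>u\<in>V. if E w u then f w * g u else 0)"
    by (rule sum.swap)
  also have "\<dots> = (\<Sum>w\<in>V. \<Sum>u\<in>V. if E u w then g u * f w else 0)"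
    using Esym by (intro sum.cong refl) (auto simp: mult.commute)
  also have "\<dots> = ip f (Pop g)"
    unfolding ip_def
  proof (intro sum.cong refl)
    fix x assume "x \<in> V"
    from selfadj_aux[OF this, of g f] show "(\<Sum>u\<in>V. if E u x then g u * f x else 0) = dg x * f x * Pop g x"
      by (simp add: ac_simps)
  qed
  finally show ?thesis .
qed

lemma ip_comm: "ip f g = ip g f" unfolding ip_def by (simp add: ac_simps)

lemma ip_lin: "ip (\<lambda>x. a x + t * b x) c = ip a c + t * ip b c"
  unfolding ip_def by (simp add: algebra_simps sum.distrib sum_distrib_left)

lemma Pop_lin: "Pop (\<lambda>x. a x + t * b x) = (\<lambda>x. Pop a x + t * Pop b x)"
  unfolding Pop_def by (auto simp: sum.distrib sum_distrib_left add_divide_distrib)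

lemma ip_delta: "u \<in> V \<Longrightarrow> ip F (\<lambda>x. if x = u then 1 else 0) = dg u * F u"
  unfolding ip_def using finV by (simp add: if_distrib cong: if_cong)

definition Q where "Q f = ip (Pop f) (Pop f)"
definition N where "N f = ip f f"

lemma ip_sq_nonneg: "ip f f \<ge> 0"
  unfolding ip_def using dg_ge1 by (intro sum_nonneg) (metis mult.assoc mult_nonneg_nonneg order_trans zero_le_one zero_le_square)

lemma Q_nonneg: "Q f \<ge> 0" unfolding Q_def by (rule ip_sq_nonneg)

lemma ip_scale: "ip (\<lambda>x. c * f x) g = c * ip f g"
  unfolding ip_def by (simp add: sum_distrib_left algebra_simps)
lemma Pop_scale: "Pop (\<lambda>x. c * f x) = (\<lambda>x. c * Pop f x)"
  unfolding Pop_def by (auto simp: sum_distrib_left)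
lemma Pop_cong: "(\<And>x. x \<in> V \<Longrightarrow> f x = h x) \<Longrightarrow> Pop f u = Pop h u"
  unfolding Pop_def using nb_sub by (metis (no_types, lifting) subsetD sum.cong)
lemma ip_cong: "(\<And>x. x \<in> V \<Longrightarrow> f x = h x) \<Longrightarrow> ip f g = ip h g"
  unfolding ip_def by simp

lemma N_pos_ex: "N f = 1 \<Longrightarrow> \<exists>u\<in>V. f u \<noteq> 0"
  unfolding N_def ip_def by (metis (mono_tags, lifting) mult_zero_right sum.neutral zero_neq_one)

lemma cpt: "compact (Pi\<^sub>E UNIV (\<lambda>u. if u \<in> V then {-1..1::real} else {0}))"
proof -
  have "compactin (product_topology (\<lambda>i. euclidean) UNIV) (Pi\<^sub>E UNIV (\<lambda>u. if u \<in> V then {-1..1::real} else {0}))"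
    by (subst compactin_PiE) auto
  then show ?thesis by (simp add: euclidean_product_topology)
qed

lemma contN: "continuous_on UNIV N"
  unfolding N_def ip_def by (intro continuous_intros continuous_on_product_coordinates)
lemma contQ: "continuous_on A Q"
  unfolding Q_def ip_def Pop_def
  apply (intro continuous_intros)
  apply (auto intro: continuous_on_subset[OF continuous_on_product_coordinates] dest: dg_ge1)
  done

lemma N_bound: assumes "N f = 1" "u \<in> V" shows "\<bar>f u\<bar> \<le> 1"
proof -
  have "dg u * f u * f u \<le> (\<Sum>u\<in>V. dg u * f u * f u)"
    using assms(2) finV dg_ge1
    by (intro member_le_sum) (auto simp: mult.assoc dg_def)
  then have "dg u * (f u)^2 \<le> 1" using assms(1) by (simp add: N_def ip_def power2_eq_square mult.assoc)
  moreover have "(f u)^2 \<le> dg u * (f u)^2" using dg_ge1[OF assms(2)]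
    by (simp add: mult_le_cancel_right1)
  ultimately have "(f u)^2 \<le> 1^2" by simp
  then show ?thesis using abs_le_square_iff[of "f u" 1] by simp
qed

lemma min_exists:
  assumes v: "v \<in> V"
  shows "\<exists>g. (\<forall>x. x \<notin> V \<longrightarrow> g x = 0) \<and> N g = 1 \<and>
     (\<forall>f. (\<forall>x. x \<notin> V \<longrightarrow> f x = 0) \<longrightarrow> N f = 1 \<longrightarrow> Q g \<le> Q f)"
proof -
  define S where "S = Pi\<^sub>E UNIV (\<lambda>u. if u \<in> V then {-1..1::real} else {0}) \<inter> N -` {1}"
  have "closed (N -` {1})" using contN by (simp add: continuous_on_closed_vimage)
  then have cS: "compact S" unfolding S_def using cpt by (rule compact_Int_closed[rotated])
  have memS: "f \<in> S \<longleftrightarrow> (\<forall>x. x \<notin> V \<longrightarrow> f x = 0) \<and> N f = 1" for f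
    unfolding S_def using N_bound by (auto simp: PiE_iff abs_le_iff)
  define d where "d = (\<lambda>x. if x = v then 1 / sqrt (dg v) else (0::real))"
  have "N d = dg v * (1 / sqrt (dg v)) * (1 / sqrt (dg v))"
    unfolding N_def ip_def d_def using v finV by (simp add: if_distrib cong: if_cong)
  also have "\<dots> = 1" using dg_ge1[OF v] by (simp add: field_simps)
  finally have "d \<in> S" unfolding memS using v by (simp add: d_def)
  then have "S \<noteq> {}" by auto
  from continuous_attains_inf[OF cS this contQ] obtain g where "g \<in> S" "\<forall>y\<in>S. Q g \<le> Q y" by blast
  then show ?thesis using memS by blast
qed

lemma quad_zero: fixes a b :: real assumes "\<forall>t. 0 \<le> 2*t*a + t^2*b" shows "a = 0"
proof (rule ccontr)
  assume a: "a \<noteq> 0"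
  define c where "c = \<bar>b\<bar> + 1"
  have c: "c > 0" unfolding c_def by simp
  define t where "t = - a / (2*c)"
  have eq: "4*c^2*(2*t*a + t^2*b) = -4*a^2*c + a^2*b"
    using c by (simp add: t_def field_simps power2_eq_square)
  have "a^2*b \<le> a^2*c" unfolding c_def by (intro mult_left_mono) auto
  moreover have "a^2 > 0" using a by simp
  moreover have "a^2*c > 0" using \<open>a^2 > 0\<close> c by (rule mult_pos_pos)
  ultimately have "-4*a^2*c + a^2*b < 0" by linarith
  moreover have "4*c^2*(2*t*a + t^2*b) \<ge> 0" using assms c by simp
  ultimately show False using eq by linarith
qed

lemma ip2: "ip (\<lambda>x. a x + t*b x) (\<lambda>x. a x + t*b x) = ip a a + 2*t*ip a b + t^2 * ip b b"
proof -
  let ?F = "\<lambda>x. a x + t*b x"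
  have 1: "ip ?F ?F = ip a ?F + t*ip b ?F" by (rule ip_lin)
  have 2: "ip a ?F = ip a a + t*ip b a" using ip_comm ip_lin by metis
  have 3: "ip b ?F = ip a b + t*ip b b" using ip_comm ip_lin by metis
  have 4: "ip b a = ip a b" by (rule ip_comm)
  show ?thesis unfolding 1 2 3 4 by (simp add: algebra_simps power2_eq_square)
qed

lemma nl: "norm_laplacian V E f v = f v - Pop f v"
  unfolding norm_laplacian_def Pop_def dg_def by simp

context
  fixes g assumes g0: "\<forall>x. x \<notin> V \<longrightarrow> g x = 0" and gN: "N g = 1"
    and gmin: "\<forall>f. (\<forall>x. x \<notin> V \<longrightarrow> f x = 0) \<longrightarrow> N f = 1 \<longrightarrow> Q g \<le> Q f"
begin

lemma Q_lower: assumes f0: "\<forall>x. x \<notin> V \<longrightarrow> f x = 0" shows "Q g * N f \<le> Q f"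
proof (cases "N f = 0")
  case True then show ?thesis using Q_nonneg by simp
next
  case False
  then have pos: "N f > 0" using ip_sq_nonneg[of f] by (simp add: N_def)
  define c where "c = 1 / sqrt (N f)"
  define f' where "f' = (\<lambda>x. c * f x)"
  have "N f' = c * c * N f" unfolding N_def f'_def
    by (simp add: ip_scale ip_comm[of f "\<lambda>x. c * f x"])
  also have "\<dots> = 1" using pos by (simp add: c_def)
  finally have "Q g \<le> Q f'" using gmin f0 by (auto simp: f'_def)
  also have "Q f' = c * c * Q f" unfolding Q_def f'_def Pop_scale
    by (simp add: ip_scale ip_comm[of "Pop f" "\<lambda>x. c * Pop f x"])
  also have "c * c = 1 / N f" using pos by (simp add: c_def)
  finally show ?thesis using pos by (simp add: field_simps)
qed

lemma eigP2: assumes u: "u \<in> V" shows "Pop (Pop g) u = Q g * g u"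
proof -
  define h where "h = (\<lambda>x. if x = u then 1 else (0::real))"
  define m where "m = Q g"
  define A where "A = ip (Pop g) (Pop h)"
  define B where "B = ip g h"
  have "\<forall>t. 0 \<le> 2*t*(A - m*B) + t^2*(Q h - m * N h)"
  proof
    fix t
    have "m * N (\<lambda>x. g x + t * h x) \<le> Q (\<lambda>x. g x + t * h x)"
      unfolding m_def using g0 u by (intro Q_lower) (auto simp: h_def)
    moreover have "N (\<lambda>x. g x + t * h x) = 1 + 2*t*B + t^2 * N h"
      unfolding N_def ip2 B_def using gN by (simp add: N_def)
    moreover have "Q (\<lambda>x. g x + t * h x) = m + 2*t*A + t^2 * Q h"
      unfolding Q_def Pop_lin ip2 A_def m_def by (simp add: Q_def)
    ultimately show "0 \<le> 2*t*(A - m*B) + t^2*(Q h - m * N h)"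
      by (simp add: algebra_simps)
  qed
  then have "A - m * B = 0" by (rule quad_zero)
  then have "A = m * B" by simp
  moreover have "A = dg u * Pop (Pop g) u"
    unfolding A_def selfadj[symmetric] h_def using u by (simp add: ip_delta)
  moreover have "B = dg u * g u" unfolding B_def h_def using u by (simp add: ip_delta)
  ultimately show ?thesis using dg_ge1[OF u] by (simp add: m_def)
qed

end

lemma delta_bound:
  assumes v: "v \<in> V" and nb: "\<forall>w\<in>nbhd V E v. deg V E w \<ge> 4"
  shows "Q (\<lambda>x. if x = v then 1 else 0) \<le> dg v / 4"
proof -
  let ?d = "\<lambda>x. if x = v then 1 else (0::real)"
  have P: "Pop ?d u = (if E v u then 1 else 0) / dg u" for u
  proof -
    have "(\<Sum>w\<in>V. if E w u then ?d w else 0) = (\<Sum>w\<in>V. if w = v then (if E v u then 1 else 0) else 0)"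
      by (rule sum.cong) auto
    also have "\<dots> = (if E v u then 1 else 0)" using v finV by simp
    finally show ?thesis unfolding Pop_sum by simp
  qed
  have "Q ?d = (\<Sum>u\<in>V. if E v u then 1 / dg u else 0)"
    unfolding Q_def ip_def P
  proof (intro sum.cong refl)
    fix u assume "u \<in> V"
    then show "dg u * ((if E v u then 1 else 0) / dg u) * ((if E v u then 1 else 0) / dg u) = (if E v u then 1 / dg u else 0)"
      using dg_ge1[of u] by (simp add: field_simps)
  qed
  also have "\<dots> \<le> (\<Sum>u\<in>V. if E v u then 1/4 else 0)"
  proof (intro sum_mono)
    fix u assume u: "u \<in> V"
    show "(if E v u then 1 / dg u else 0) \<le> (if E v u then 1/4 else 0)"
    proof (cases "E v u")
      case True
      then have "u \<in> nbhd V E v" using u Esym by (simp add: nbhd_def)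
      then have "dg u \<ge> 4" using nb by (simp add: dg_def)
      then show ?thesis using True by (simp add: field_simps)
    qed simp
  qed
  also have "\<dots> = real (card {u \<in> V. E v u}) / 4"
    using finV by (simp add: sum.If_cases Int_def)
  also have "{u \<in> V. E v u} = nbhd V E v" using Esym by (auto simp: nbhd_def)
  finally show ?thesis by (simp add: dg_def deg_def)
qed

lemma key:
  assumes v: "v \<in> V" and nb: "\<forall>w\<in>nbhd V E v. deg V E w \<ge> 4"
  shows "\<exists>lam. laplacian_eigenvalue V E lam \<and> \<bar>1 - lam\<bar> \<le> 1/2"
proof -
  obtain g where g0: "\<forall>x. x \<notin> V \<longrightarrow> g x = 0" and gN: "N g = 1"
    and gmin: "\<forall>f. (\<forall>x. x \<notin> V \<longrightarrow> f x = 0) \<longrightarrow> N f = 1 \<longrightarrow> Q g \<le> Q f"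
    using min_exists[OF v] by blast
  define m where "m = Q g"
  let ?d = "\<lambda>x. if x = v then 1 else (0::real)"
  have "m * N ?d \<le> Q ?d" unfolding m_def using Q_lower[OF g0 gN gmin, of ?d] v by auto
  moreover have "N ?d = dg v" unfolding N_def using v by (simp add: ip_delta)
  ultimately have "m * dg v \<le> dg v / 4" using delta_bound[OF v nb] by simp
  then have m4: "m \<le> 1/4" using dg_ge1[OF v] by (simp add: field_simps)
  have m0: "m \<ge> 0" unfolding m_def by (rule Q_nonneg)
  define s where "s = sqrt m"
  have s0: "s \<ge> 0" and ss: "s * s = m" using m0 by (auto simp: s_def)
  have s2: "s \<le> 1/2"
  proof (rule ccontr)
    assume "\<not> s \<le> 1/2"
    then have "s * s > 1/2 * (1/2)" by (intro mult_strict_mono) auto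
    then show False using ss m4 by simp
  qed
  have eig: "\<And>u. u \<in> V \<Longrightarrow> Pop (Pop g) u = m * g u"
    unfolding m_def using eigP2[OF g0 gN gmin] by blast
  define h where "h = (\<lambda>x. Pop g x + s * g x)"
  show ?thesis
  proof (cases "\<exists>u\<in>V. h u \<noteq> 0")
    case True
    have "\<forall>x\<in>V. norm_laplacian V E h x = (1 - s) * h x"
    proof
      fix x assume x: "x \<in> V"
      have "Pop h x = Pop (Pop g) x + s * Pop g x" unfolding h_def Pop_lin by simp
      also have "\<dots> = s * h x" using eig[OF x] ss by (simp add: h_def algebra_simps)
      finally show "norm_laplacian V E h x = (1 - s) * h x" by (simp add: nl algebra_simps)
    qed
    then have "laplacian_eigenvalue V E (1 - s)" using True by (auto simp: laplacian_eigenvalue_def)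
    then show ?thesis using s0 s2 by (intro exI[of _ "1 - s"]) simp
  next
    case False
    have "\<forall>x\<in>V. norm_laplacian V E g x = (1 + s) * g x"
    proof
      fix x assume x: "x \<in> V"
      have "Pop g x = - s * g x" using False x by (auto simp: h_def)
      then show "norm_laplacian V E g x = (1 + s) * g x" by (simp add: nl algebra_simps)
    qed
    then have "laplacian_eigenvalue V E (1 + s)" using N_pos_ex[OF gN] by (auto simp: laplacian_eigenvalue_def)
    then show ?thesis using s0 s2 by (intro exI[of _ "1 + s"]) simp
  qed
qed

end

theorem mainTheorem15:
  fixes V :: "'a set" and E :: "'a \<Rightarrow> 'a \<Rightarrow> bool"
  assumes "simple_graph V E"
    and "connected_graph V E"
    and "card V \<ge> 3"
    and "spectral_eps V E > 1 / 2"
  shows "\<forall>v\<in>V. \<exists>w\<in>nbhd V E v. deg V E w \<le> 3"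
proof (rule ccontr)
  assume "\<not> ?thesis"
  then obtain v where v: "v \<in> V" and nb: "\<forall>w\<in>nbhd V E v. deg V E w \<ge> 4"
    by force
  have finV: "finite V" using assms(1) by (simp add: simple_graph_def)
  have dpos: "deg V E u > 0" if u: "u \<in> V" for u
  proof -
    obtain y where y: "y \<in> V" "y \<noteq> u"
    proof (rule ccontr)
      assume "\<not> thesis"
      then have "V \<subseteq> {u}" using that by blast
      then have "card V \<le> 1" using card_mono[of "{u}" V] by simp
      then show False using assms(3) by simp
    qed
    have "E\<^sup>*\<^sup>* u y" using assms(2) u y by (simp add: connected_graph_def)
    then obtain z where "E u z" using y(2) by (metis converse_rtranclpE)
    then have "z \<in> nbhd V E u" using assms(1) by (simp add: simple_graph_def nbhd_def)
    moreover have "finite (nbhd V E u)" using finV by (simp add: nbhd_def)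
    ultimately show ?thesis unfolding deg_def by (auto simp: card_gt_0_iff)
  qed
  interpret G V E using assms(1) dpos by unfold_locales auto
  obtain lam where lam: "laplacian_eigenvalue V E lam" "\<bar>1 - lam\<bar> \<le> 1/2"
    using key[OF v nb] by blast
  have "spectral_eps V E \<le> \<bar>1 - lam\<bar>"
    unfolding spectral_eps_def
    by (rule cInf_lower) (use lam in \<open>auto intro: bdd_belowI[of _ 0]\<close>)
  then show False using lam assms(4) by simp
qed

end
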